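(* Let $S$ be a Stone relation algebra. Then: 1. For all ideal-points $p,q\in S$ with $p\neq q$: $p\sqcap q=\bot$ and $p^{\smile}q=\bot$. 2. If $S$ is simple, then every point of $S$ is an ideal-point. 3. An element $p\in S$ is an ideal-point if and only if $p$ is a point and for every point $q\in S$, $q\sqsubseteq p$ or $q\sqsubseteq\overline{p}$.
   Context: A Stone relation algebra is a structure $(S,\sqcup,\sqcap,\cdot,\overline{\,\cdot\,},{}^{\smile},\bot,\top,1)$ (write $xy$ for $x\cdot y$, $\overline{x}$ for the pseudocomplement, $x^{\smile}$ for the converse) such that: $(S,\sqcup,\sqcap,\bot,\top)$ is a bounded distributive lattice with order $x\sqsubseteq y\iff x\sqcup y=y$; $x\sqcap y=\bot\iff x\sqsubseteq\overline{y}$; $\overline{x}\sqcup\overline{\overline{x}}=\top$; $\cdot$ is associative with two-sided unit $1$, distributes over $\sqcup$ on both sides, and $\bot$ is a zero of $\cdot$; $x^{\smile\smile}=x$, $(xy)^{\smile}=y^{\smile}x^{\smile}$, $(x\sqcup y)^{\smile}=x^{\smile}\sqcup y^{\smile}$; $\overline{\overline{1}}=1$; $\overline{\overline{xy}}=\overline{\overline{x}}\,\overline{\overline{y}}$; $xy\sqcap z\sqsubseteq x(y\sqcap x^{\smile}z)$. $x$ is injective if $xx^{\smile}\sqsubseteq1$, surjective if $1\sqsubseteq x^{\smile}x$, a vector if $x\top=x$, a covector if $\top x=x$, an ideal if it is a vector and a covector, a point if it is an injective surjective vector, and simple if $\top x\top=\top$. $S$ is simple if every element other than $\bot$ is simple.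 An ideal-point is a point $p$ such that for all points $q$ and all ideals $x\neq\bot$, $qx\sqsubseteq p$ implies $q\sqsubseteq p$. *)

theory Defs
  imports Main
begin

class conv =
  fixes conv :: "'a \<Rightarrow> 'a"

class stone_relation_algebra = bounded_lattice + distrib_lattice + uminus + monoid_mult + conv +
  assumes pseudo_compl: "inf x y = bot \<longleftrightarrow> x \<le> - y"
  assumes stone: "sup (- x) (- (- x)) = top"
  assumes mult_sup_distl: "x * sup y z = sup (x * y) (x * z)"
  assumes mult_sup_distr: "sup x y * z = sup (x * z) (y * z)"
  assumes mult_bot_left: "bot * x = bot"
  assumes mult_bot_right: "x * bot = bot"
  assumes conv_involutive: "conv (conv x) = x"
  assumes conv_mult: "conv (x * y) = conv y * conv x"
  assumes conv_sup: "conv (sup x y) = sup (conv x) (conv y)"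
  assumes pp_one: "- (- 1) = 1"
  assumes pp_mult: "- (- (x * y)) = (- (- x)) * (- (- y))"
  assumes dedekind_1: "inf (x * y) z \<le> x * inf y (conv x * z)"

definition injective :: "'a::stone_relation_algebra \<Rightarrow> bool" where
  "injective x \<longleftrightarrow> x * conv x \<le> 1"

definition surjective :: "'a::stone_relation_algebra \<Rightarrow> bool" where
  "surjective x \<longleftrightarrow> 1 \<le> conv x * x"

definition vector :: "'a::stone_relation_algebra \<Rightarrow> bool" where
  "vector x \<longleftrightarrow> x * top = x"

definition covector :: "'a::stone_relation_algebra \<Rightarrow> bool" where
  "covector x \<longleftrightarrow> top * x = x"

definition ideal :: "'a::stone_relation_algebra \<Rightarrow> bool" where
  "ideal x \<longleftrightarrow> vector x \<and> covector x"

definition point :: "'a::stone_relation_algebra \<Rightarrow> bool" where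
  "point x \<longleftrightarrow> injective x \<and> surjective x \<and> vector x"

definition simple_elem :: "'a::stone_relation_algebra \<Rightarrow> bool" where
  "simple_elem x \<longleftrightarrow> top * x * top = top"

definition ideal_point :: "'a::stone_relation_algebra \<Rightarrow> bool" where
  "ideal_point p \<longleftrightarrow> point p \<and>
     (\<forall>q x. point q \<and> ideal x \<and> x \<noteq> bot \<and> q * x \<le> p \<longrightarrow> q \<le> p)"

end

theory Submission
  imports Defs
begin


lemma mult_right_mono': "(x::'a::stone_relation_algebra) \<le> y \<Longrightarrow> z * x \<le> z * y"
  by (metis le_iff_sup mult_sup_distl)

lemma mult_left_mono': "(x::'a::stone_relation_algebra) \<le> y \<Longrightarrow> x * z \<le> y * z"
  by (metis le_iff_sup mult_sup_distr)

lemma conv_mono': "(x::'a::stone_relation_algebra) \<le> y \<Longrightarrow> conv x \<le> conv y"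
  by (metis le_iff_sup conv_sup)

lemma conv_top': "conv (top::'a::stone_relation_algebra) = top"
  by (metis conv_involutive conv_mono' top.extremum top.extremum_uniqueI)

lemma conv_inf': "conv (inf (a::'a::stone_relation_algebra) b) = inf (conv a) (conv b)"
proof (rule order.antisym)
  show "conv (inf a b) \<le> inf (conv a) (conv b)" by (simp add: conv_mono')
  have "conv (inf (conv a) (conv b)) \<le> inf a b"
    by (metis conv_involutive conv_mono' inf.cobounded1 inf.cobounded2 le_inf_iff)
  then show "inf (conv a) (conv b) \<le> conv (inf a b)"
    by (metis conv_involutive conv_mono')
qed

lemma dedekind_2: "inf ((y::'a::stone_relation_algebra) * z) w \<le> inf y (w * conv z) * z"
proof -
  have "conv (inf (y * z) w) \<le> conv z * inf (conv y) (conv (conv z) * conv w)"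
    by (simp add: conv_inf' conv_mult dedekind_1)
  then have "conv (conv (inf (y * z) w)) \<le> conv (conv z * inf (conv y) (conv (conv z) * conv w))"
    by (rule conv_mono')
  then show ?thesis by (simp add: conv_mult conv_inf' conv_involutive)
qed

lemma top_top: "(top::'a::stone_relation_algebra) * top = top"
proof -
  have "1 * top \<le> (top::'a::stone_relation_algebra) * top" by (rule mult_left_mono') simp
  then show ?thesis by (simp add: top.extremum_uniqueI)
qed

lemma le_top_x_top: "(a::'a::stone_relation_algebra) \<le> top * a * top"
proof -
  have "1 * a \<le> top * a" by (rule mult_left_mono') simp
  then have "a \<le> top * a" by (simp only: mult_1_left)
  also have "\<dots> = top * a * 1" by (simp only: mult_1_right)
  also have "\<dots> \<le> top * a * top" by (rule mult_right_mono') simp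
  finally show ?thesis .
qed

lemma points_le_eq:
  fixes p q :: "'a::stone_relation_algebra"
  assumes "point p" "point q" "q \<le> p" shows "p = q"
proof -
  have qv: "q * top = q" and qs: "1 \<le> conv q * q" and pv: "p * top = p" and pi: "p * conv p \<le> 1"
    using assms by (auto simp: point_def vector_def surjective_def injective_def)
  have "conv (q * top) = conv q" using qv by simp
  then have tq: "top * conv q = conv q" by (simp only: conv_mult conv_top')
  have "top * 1 \<le> top * (conv q * q)" using qs by (rule mult_right_mono')
  then have "top \<le> conv q * q" using tq by (simp add: mult.assoc[symmetric])
  then have "p * top \<le> p * (conv q * q)" by (rule mult_right_mono')
  then have "p \<le> p * conv q * q" using pv by (simp add: mult.assoc)
  also have "\<dots> \<le> p * conv p * q"
    using assms(3) by (intro mult_left_mono' mult_right_mono' conv_mono')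
  also have "\<dots> \<le> 1 * q" using pi by (rule mult_left_mono')
  also have "\<dots> = q" by simp
  finally show ?thesis using assms(3) by (rule order.antisym)
qed

lemma ip_dich:
  fixes p q :: "'a::stone_relation_algebra"
  assumes "ideal_point p" "point q" shows "q \<le> p \<or> q \<le> - p"
proof (cases "inf q p = bot")
  case True then show ?thesis using pseudo_compl by blast
next
  case False
  define a where "a = inf q p"
  define x where "x = top * a * top"
  have pp: "point p" using assms(1) unfolding ideal_point_def by blast
  have qv: "q * top = q" and qi: "q * conv q \<le> 1" and pv: "p * top = p"
    using assms pp by (auto simp: point_def vector_def injective_def)
  have idx: "ideal x" unfolding x_def ideal_def vector_def covector_def
    by (simp add: top_top mult.assoc flip: mult.assoc[of top top])
  have "a \<le> x" unfolding x_def by (rule le_top_x_top)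
  then have xb: "x \<noteq> bot" using False a_def bot_unique by metis
  have "q * x \<le> q * top" by (rule mult_right_mono') simp
  moreover have "q * x \<le> top * x" by (rule mult_left_mono') simp
  ultimately have "q * x \<le> inf q x" using idx qv by (simp add: ideal_def covector_def)
  also have "inf q x = inf (top * (a * top)) q" unfolding x_def by (simp add: mult.assoc inf.commute)
  also have "\<dots> \<le> inf top (q * conv (a * top)) * (a * top)" by (rule dedekind_2)
  also have "\<dots> = q * top * conv a * (a * top)" by (simp add: conv_mult conv_top' mult.assoc)
  also have "\<dots> = q * conv a * a * top" using qv by (simp add: mult.assoc)
  also have "\<dots> \<le> q * conv q * a * top" unfolding a_def
    by (intro mult_left_mono' mult_right_mono' conv_mono') simp
  also have "\<dots> \<le> 1 * a * top" using qi by (intro mult_left_mono')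
  also have "\<dots> = a * top" by simp
  also have "\<dots> \<le> p * top" unfolding a_def by (intro mult_left_mono') simp
  finally have "q * x \<le> p" using pv by simp
  then have "q \<le> p" using assms idx xb unfolding ideal_point_def by blast
  then show ?thesis by simp
qed

lemma ip_char: "ideal_point (p::'a::stone_relation_algebra) \<longleftrightarrow> point p \<and> (\<forall>q. point q \<longrightarrow> q \<le> p \<or> q \<le> - p)"
proof
  assume "ideal_point p" then show "point p \<and> (\<forall>q. point q \<longrightarrow> q \<le> p \<or> q \<le> - p)"
    using ip_dich[of p] unfolding ideal_point_def by blast
next
  assume H: "point p \<and> (\<forall>q. point q \<longrightarrow> q \<le> p \<or> q \<le> - p)"
  show "ideal_point p" unfolding ideal_point_def
  proof (intro conjI allI impI)
    show "point p" using H by (rule conjunct1)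
    fix q x assume A: "point q \<and> ideal x \<and> x \<noteq> bot \<and> q * x \<le> p"
    show "q \<le> p"
    proof (rule ccontr)
      assume "\<not> q \<le> p"
      then have "q \<le> - p" using H A by blast
      have "q * x \<le> q * top" by (rule mult_right_mono') simp
      then have "q * x \<le> q" using A by (simp add: point_def vector_def)
      then have "q * x \<le> - p" using \<open>q \<le> - p\<close> by (rule order.trans)
      then have "q * x \<le> inf p (- p)" using A by simp
      moreover have "inf p (- p) = bot" using pseudo_compl[of "- p" p] by (simp add: inf.commute)
      ultimately have qx: "q * x = bot" by (simp add: bot_unique)
      have "1 \<le> conv q * q" using A by (simp add: point_def surjective_def)
      then have "1 * x \<le> conv q * q * x" by (rule mult_left_mono')
      then have "x \<le> conv q * q * x" by simp
      then have "x \<le> bot" using qx by (simp add: mult.assoc mult_bot_right)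
      then show False using A by (simp add: bot_unique)
    qed
  qed
qed

theorem mainTheorem11:
  shows "(\<forall>p q :: 'a::stone_relation_algebra.
            ideal_point p \<and> ideal_point q \<and> p \<noteq> q \<longrightarrow> inf p q = bot \<and> conv p * q = bot)
       \<and> ((\<forall>x :: 'a. x \<noteq> bot \<longrightarrow> simple_elem x) \<longrightarrow> (\<forall>p :: 'a. point p \<longrightarrow> ideal_point p))
       \<and> (\<forall>p :: 'a. ideal_point p \<longleftrightarrow> point p \<and> (\<forall>q. point q \<longrightarrow> q \<le> p \<or> q \<le> - p))"
proof (intro conjI allI impI)
  fix p q :: 'a
  assume A: "ideal_point p \<and> ideal_point q \<and> p \<noteq> q"
  then have pp: "point p" "point q" unfolding ideal_point_def by blast+
  have "q \<le> p \<or> q \<le> - p" using A pp ip_dich by blast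
  then have "q \<le> - p" using A pp points_le_eq by blast
  then show pq: "inf p q = bot" using pseudo_compl inf.commute by metis
  have "conv p * q = inf (conv p * q) top" by simp
  also have "\<dots> \<le> conv p * inf q (conv (conv p) * top)" by (rule dedekind_1)
  also have "\<dots> = conv p * inf q p" using pp by (simp add: conv_involutive point_def vector_def)
  also have "\<dots> = bot" using pq by (simp add: inf.commute mult_bot_right)
  finally show "conv p * q = bot" using bot_unique by blast
next
  assume S: "\<forall>x :: 'a. x \<noteq> bot \<longrightarrow> simple_elem x"
  fix p :: 'a assume P: "point p"
  show "ideal_point p" unfolding ideal_point_def
  proof (intro conjI allI impI)
    show "point p" using P .
    fix q x :: 'a assume A: "point q \<and> ideal x \<and> x \<noteq> bot \<and> q * x \<le> p"
    then have "top * x * top = top" using S unfolding simple_elem_def by blast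
    then have "x = top" using A by (simp add: ideal_def vector_def covector_def mult.assoc)
    then have "q * top \<le> p" "q * top = q" using A by (auto simp: point_def vector_def)
    then show "q \<le> p" by simp
  qed
next
  fix p :: 'a
  show "ideal_point p \<longleftrightarrow> point p \<and> (\<forall>q. point q \<longrightarrow> q \<le> p \<or> q \<le> - p)" by (rule ip_char)
qed

end
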